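(* Let $r\in\mathbb{N}$, let $P=(p_{i,j})$ be a symmetric $r\times r$ matrix with entries in $[0,1]$, let $k\in\mathbb{N}$ and $\vec T,\vec n\in\mathbb{N}^r$ be such that $k\leq\vec T(i)\leq n_i$ for all $i$. Let $G\sim G(\vec n,P)$, let $i\in[r]$ and let $v_i\in V_i$ be a vertex of type $i$. Then \[\Pr[\mathrm{pop}(\mathrm{GW}(\vec n-\vec T,P,e_i))\geq k]\leq\Pr[|\mathrm{CC}(v_i)|\geq k]\leq\Pr[\mathrm{pop}(\mathrm{GW}(\vec n,P,e_i))\geq k].\]
   Context: $G(\vec n,P)$: vertex set a disjoint union $V_1\cup\cdots\cup V_r$ with $|V_i|=n_i$; each pair $v\in V_i$, $u\in V_j$ of distinct vertices is an edge independently with probability $p_{i,j}$. $\mathrm{CC}(v)$ is the connected component of $v$. For $\vec m\in\mathbb{N}^r$ and $x\in\mathbb{N}^r$, $\mathrm{GW}(\vec m,P,x)$ is the multi-type Galton–Watson process started with $x(i)$ individuals of type $i$, in which each individual of type $i$ independently has, for each $j$, an independent $\mathrm{Binomial}(m_j,p_{i,j})$ number of children of type $j$; $\mathrm{pop}(\cdot)$ is its total population (including the initial individuals), defined as $\infty$ if the process does not terminate. $e_i$ is the $i$-th standard basis vector. *)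

theory Defs
  imports "HOL-Probability.Probability"
begin

(* Types are indexed by 0..r-1; a vertex of type i is a pair (i,a) with a < n i. *)
definition vertices :: "nat \<Rightarrow> (nat \<Rightarrow> nat) \<Rightarrow> (nat \<times> nat) set" where
  "vertices r n = {(i,a). i < r \<and> a < n i}"

definition pot_edges :: "nat \<Rightarrow> (nat \<Rightarrow> nat) \<Rightarrow> (nat \<times> nat) set set" where
  "pot_edges r n = {{u,v} | u v. u \<in> vertices r n \<and> v \<in> vertices r n \<and> u \<noteq> v}"

(* probability of the edge {u,v}: p_{type u, type v} (well defined as P is symmetric) *)
definition edge_prob :: "(nat \<Rightarrow> nat \<Rightarrow> real) \<Rightarrow> (nat \<times> nat) set \<Rightarrow> real" where
  "edge_prob P e = (SOME q. \<exists>u v. e = {u,v} \<and> q = P (fst u) (fst v))"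

definition Gnp :: "nat \<Rightarrow> (nat \<Rightarrow> nat) \<Rightarrow> (nat \<Rightarrow> nat \<Rightarrow> real) \<Rightarrow> ((nat \<times> nat) set \<Rightarrow> bool) pmf" where
  "Gnp r n P = Pi_pmf (pot_edges r n) False (\<lambda>e. bernoulli_pmf (edge_prob P e))"

definition adj_rel :: "((nat \<times> nat) set \<Rightarrow> bool) \<Rightarrow> ((nat \<times> nat) \<times> (nat \<times> nat)) set" where
  "adj_rel G = {(u,w). G {u,w}}"

definition CC :: "((nat \<times> nat) set \<Rightarrow> bool) \<Rightarrow> nat \<times> nat \<Rightarrow> (nat \<times> nat) set" where
  "CC G v = (adj_rel G)\<^sup>* `` {v}"

definition vadd_pmf :: "(nat \<Rightarrow> nat) pmf \<Rightarrow> (nat \<Rightarrow> nat) pmf \<Rightarrow> (nat \<Rightarrow> nat) pmf" where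
  "vadd_pmf A B = bind_pmf A (\<lambda>a. map_pmf (\<lambda>b. (\<lambda>j. a j + b j)) B)"

(* children vector of one individual of type i: independent Binomial(m_j, p_ij), j < r *)
definition offspring :: "nat \<Rightarrow> (nat \<Rightarrow> nat) \<Rightarrow> (nat \<Rightarrow> nat \<Rightarrow> real) \<Rightarrow> nat \<Rightarrow> (nat \<Rightarrow> nat) pmf" where
  "offspring r m P i = Pi_pmf {..<r} 0 (\<lambda>j. binomial_pmf (m j) (P i j))"

primrec iid_sum :: "nat \<Rightarrow> (nat \<Rightarrow> nat) pmf \<Rightarrow> (nat \<Rightarrow> nat) pmf" where
  "iid_sum 0 D = return_pmf (\<lambda>_. 0)"
| "iid_sum (Suc N) D = vadd_pmf (iid_sum N D) D"

(* total children of the individuals of types < i of generation z *)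
primrec gw_step_aux :: "nat \<Rightarrow> (nat \<Rightarrow> nat) \<Rightarrow> (nat \<Rightarrow> nat \<Rightarrow> real) \<Rightarrow> (nat \<Rightarrow> nat) \<Rightarrow> nat \<Rightarrow> (nat \<Rightarrow> nat) pmf" where
  "gw_step_aux r m P z 0 = return_pmf (\<lambda>_. 0)"
| "gw_step_aux r m P z (Suc i) = vadd_pmf (gw_step_aux r m P z i) (iid_sum (z i) (offspring r m P i))"

definition gw_step :: "nat \<Rightarrow> (nat \<Rightarrow> nat) \<Rightarrow> (nat \<Rightarrow> nat \<Rightarrow> real) \<Rightarrow> (nat \<Rightarrow> nat) \<Rightarrow> (nat \<Rightarrow> nat) pmf" where
  "gw_step r m P z = gw_step_aux r m P z r"

definition gen_size :: "nat \<Rightarrow> (nat \<Rightarrow> nat) \<Rightarrow> nat" where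
  "gen_size r z = (\<Sum>i<r. z i)"

(* joint law of (number of individuals in generations 0..T, generation T) *)
primrec gw_state :: "nat \<Rightarrow> (nat \<Rightarrow> nat) \<Rightarrow> (nat \<Rightarrow> nat \<Rightarrow> real) \<Rightarrow> (nat \<Rightarrow> nat) \<Rightarrow> nat \<Rightarrow> (nat \<times> (nat \<Rightarrow> nat)) pmf" where
  "gw_state r m P x 0 = return_pmf (gen_size r x, x)"
| "gw_state r m P x (Suc T) = bind_pmf (gw_state r m P x T)
      (\<lambda>(s, z). map_pmf (\<lambda>z'. (s + gen_size r z', z')) (gw_step r m P z))"

(* Pr[pop(GW(m,P,x)) >= k]: the event is the increasing union over T of
   {individuals in generations 0..T >= k}, so its probability is the supremum *)
definition gw_pop_ge_prob :: "nat \<Rightarrow> (nat \<Rightarrow> nat) \<Rightarrow> (nat \<Rightarrow> nat \<Rightarrow> real) \<Rightarrow> (nat \<Rightarrow> nat) \<Rightarrow> nat \<Rightarrow> real" where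
  "gw_pop_ge_prob r m P x k = (SUP T. measure_pmf.prob (gw_state r m P x T) {sz. k \<le> fst sz})"

definition unit_vec :: "nat \<Rightarrow> nat \<Rightarrow> nat" where
  "unit_vec i = (\<lambda>j. if j = i then 1 else 0)"

end

theory Submission imports Defs "HOL-Library.Function_Algebras" "HOL-Library.Product_Plus" begin

lemma prob_bind_pmf:
  "measure_pmf.prob (bind_pmf M N) X = (\<integral>x. measure_pmf.prob (N x) X \<partial>M)"
proof -
  have "ennreal (measure_pmf.prob (bind_pmf M N) X) = (\<integral>\<^sup>+x. ennreal (measure_pmf.prob (N x) X) \<partial>M)"
    by (simp add: measure_pmf.emeasure_eq_measure[symmetric])
  also have "\<dots> = ennreal (\<integral>x. measure_pmf.prob (N x) X \<partial>M)"
    by (intro nn_integral_eq_integral measure_pmf.integrable_const_bound[where B=1]) auto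
  finally show ?thesis by (simp add: integral_nonneg_AE)
qed

lemma int_mono_pmf:
  fixes f g :: "'a \<Rightarrow> real"
  assumes "\<And>x. x \<in> set_pmf M \<Longrightarrow> f x \<le> g x"
    and "\<And>x. \<bar>f x\<bar> \<le> 1" "\<And>x. \<bar>g x\<bar> \<le> 1"
  shows "(\<integral>x. f x \<partial>M) \<le> (\<integral>x. g x \<partial>M)"
  apply (rule integral_mono_AE)
  apply (rule measure_pmf.integrable_const_bound[where B=1]; use assms in auto)
  apply (rule measure_pmf.integrable_const_bound[where B=1]; use assms in auto)
  using assms(1) by (simp add: AE_measure_pmf_iff)

definition addp :: "'a::comm_monoid_add pmf \<Rightarrow> 'a pmf \<Rightarrow> 'a pmf" where
  "addp A B = bind_pmf A (\<lambda>a. map_pmf (\<lambda>b. a + b) B)"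

lemma addp_comm: "addp A B = addp B A"
  unfolding addp_def map_pmf_def
  by (subst bind_commute_pmf) (simp add: add.commute)

lemma addp_assoc: "addp (addp A B) C = addp A (addp B C)"
  unfolding addp_def map_pmf_def
  by (simp add: bind_assoc_pmf bind_return_pmf add.assoc)

lemma addp_0: "addp A (return_pmf 0) = A"
  unfolding addp_def by (simp add: bind_return_pmf')

lemma addp_return: "addp (return_pmf c) B = map_pmf (\<lambda>b. c + b) B"
  unfolding addp_def by (simp add: bind_return_pmf)

lemma addp_swap: "addp (addp A B) (addp C D) = addp (addp A C) (addp B D)"
  by (metis addp_assoc addp_comm)

lemma map_addp_gen:
  assumes "\<And>a b. h (a + b) = g1 a + g2 b"
  shows "map_pmf h (addp A B) = addp (map_pmf g1 A) (map_pmf g2 B)"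
  unfolding addp_def map_pmf_def
  by (simp add: bind_assoc_pmf bind_return_pmf assms)

lemma bind_addp_hom:
  assumes "\<And>a b. K (a + b) = addp (K a) (K b)"
  shows "bind_pmf (addp A B) K = addp (bind_pmf A K) (bind_pmf B K)"
proof -
  have "bind_pmf (addp A B) K = bind_pmf A (\<lambda>a. bind_pmf B (\<lambda>b. K (a + b)))"
    unfolding addp_def map_pmf_def by (simp add: bind_assoc_pmf bind_return_pmf)
  also have "\<dots> = bind_pmf A (\<lambda>a. bind_pmf B (\<lambda>b. addp (K a) (K b)))"
    by (simp add: assms)
  also have "\<dots> = addp (bind_pmf A K) (bind_pmf B K)"
    unfolding addp_def map_pmf_def
    apply (simp add: bind_assoc_pmf bind_return_pmf)
    apply (intro bind_pmf_cong refl)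
    apply (subst bind_commute_pmf)
    apply (rule refl)
    done
  finally show ?thesis .
qed

lemma addp_bind_left: "addp (bind_pmf Y F) B = bind_pmf Y (\<lambda>y. addp (F y) B)"
  unfolding addp_def by (simp add: bind_assoc_pmf)

lemma addp_map_Suc: "addp (map_pmf Suc A) B = map_pmf Suc (addp A B)"
  unfolding addp_def map_pmf_def by (simp add: bind_assoc_pmf bind_return_pmf)

lemma vadd_addp: "vadd_pmf A B = addp A B"
proof -
  have e: "(\<lambda>b j. a j + b j) = (+) a" for a :: "nat \<Rightarrow> nat"
    by (auto simp: plus_fun_def)
  show ?thesis unfolding vadd_pmf_def addp_def by (simp add: e)
qed

lemma ret0: "return_pmf (\<lambda>_. 0::nat) = return_pmf 0"
  by (simp add: zero_fun_def)

lemma iid_sum_add: "iid_sum (a + b) D = addp (iid_sum a D) (iid_sum b D)"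
  by (induction b) (simp_all add: vadd_addp addp_0 addp_assoc ret0)

lemma gw_step_aux_add:
  "gw_step_aux r m P (x + y) i = addp (gw_step_aux r m P x i) (gw_step_aux r m P y i)"
  by (induction i) (simp_all add: vadd_addp addp_0 iid_sum_add addp_swap ret0)

lemma gw_step_add: "gw_step r m P (x + y) = addp (gw_step r m P x) (gw_step r m P y)"
  unfolding gw_step_def by (rule gw_step_aux_add)

lemma gen_size_add: "gen_size r (x + y) = gen_size r x + gen_size r y"
  unfolding gen_size_def by (simp add: sum.distrib)

lemma gw_state_add:
  "gw_state r m P (x + y) T = addp (gw_state r m P x T) (gw_state r m P y T)"
proof (induction T)
  case 0
  show ?case by (simp add: addp_return) (simp add: gen_size_add[unfolded plus_fun_def] plus_fun_def)
next
  case (Suc T)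
  let ?K = "(\<lambda>(s, z). map_pmf (\<lambda>z'. (s + gen_size r z', z')) (gw_step r m P z))"
  have hom: "?K (a + b) = addp (?K a) (?K b)" for a b
    by (cases a; cases b) (auto simp: gw_step_add intro!: map_addp_gen simp: gen_size_add)
  show ?case
    apply (subst gw_state.simps(2))+
    apply (subst Suc.IH)
    apply (rule bind_addp_hom[OF hom])
    done
qed

lemma gw_state_markov:
  "gw_state r m P x (Suc T) =
     bind_pmf (gw_step r m P x) (\<lambda>z. map_pmf (\<lambda>(s, z'). (gen_size r x + s, z')) (gw_state r m P z T))"
proof (induction T)
  case 0
  show ?case by (simp add: bind_return_pmf map_pmf_def)
next
  case (Suc T)
  show ?case
    apply (subst gw_state.simps(2))
    apply (subst Suc)
    apply (simp add: bind_assoc_pmf map_pmf_def bind_return_pmf split_def add.assoc)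
    done
qed

definition ST :: "nat \<Rightarrow> (nat \<Rightarrow> nat) \<Rightarrow> (nat \<Rightarrow> nat \<Rightarrow> real) \<Rightarrow> (nat \<Rightarrow> nat) \<Rightarrow> nat \<Rightarrow> nat pmf" where
  "ST r m P x T = map_pmf fst (gw_state r m P x T)"

definition tail :: "nat pmf \<Rightarrow> nat \<Rightarrow> real" where
  "tail A k = measure_pmf.prob A {k..}"

lemma tail_bounds: "0 \<le> tail A k" "tail A k \<le> 1" "\<bar>tail A k\<bar> \<le> 1"
  unfolding tail_def by auto

lemma tail_0[simp]: "tail A 0 = 1"
  unfolding tail_def by simp

lemma tail_bind: "tail (bind_pmf Y F) k = (\<integral>y. tail (F y) k \<partial>Y)"
  unfolding tail_def by (rule prob_bind_pmf)

lemma tail_map_plus: "tail (map_pmf (\<lambda>b. a + b) B) k = tail B (k - a)"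
proof -
  have "(\<lambda>b. a + b) -` {k..} = {k - a..}" by auto
  then show ?thesis unfolding tail_def by simp
qed

lemma tail_map_Suc: "tail (map_pmf Suc A) (Suc k) = tail A k"
proof -
  have "Suc -` {Suc k..} = {k..}" by auto
  then show ?thesis unfolding tail_def by simp
qed

lemma tail_map_Suc_le1: "k \<le> 1 \<Longrightarrow> tail (map_pmf Suc A) k = 1"
proof -
  assume "k \<le> 1"
  then have "Suc -` {k..} = UNIV" by auto
  then show ?thesis unfolding tail_def by simp
qed

lemma tail_return: "tail (return_pmf s) k = (if k \<le> s then 1 else 0)"
  unfolding tail_def by (simp add: indicator_def)

lemma tail_addp: "tail (addp A B) k = (\<integral>a. tail B (k - a) \<partial>A)"
  unfolding addp_def tail_bind tail_map_plus ..

lemma dom_addp_right: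
  assumes "\<And>k. tail B k \<le> tail B' k"
  shows "tail (addp A B) k \<le> tail (addp A B') k"
  unfolding tail_addp
  by (rule int_mono_pmf) (auto simp: assms tail_bounds)

lemma dom_addp_left:
  assumes "\<And>k. tail B k \<le> tail B' k"
  shows "tail (addp B A) k \<le> tail (addp B' A) k"
  using dom_addp_right[OF assms] by (simp add: addp_comm)

lemma dom_bind:
  assumes "\<And>y. y \<in> set_pmf Y \<Longrightarrow> tail (F y) k \<le> tail (G y) k"
  shows "tail (bind_pmf Y F) k \<le> tail (bind_pmf Y G) k"
  unfolding tail_bind by (rule int_mono_pmf) (auto simp: assms tail_bounds)

lemma ST_add: "ST r m P (x + y) T = addp (ST r m P x T) (ST r m P y T)"
  unfolding ST_def gw_state_add by (rule map_addp_gen) simp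

lemma ST_0: "ST r m P x 0 = return_pmf (gen_size r x)"
  unfolding ST_def by simp

lemma gw_step_aux_unit:
  "gw_step_aux r m P (unit_vec t) i = (if t < i then offspring r m P t else return_pmf 0)"
proof (induction i)
  case 0
  then show ?case by (simp add: ret0)
next
  case (Suc i)
  show ?case
  proof (cases "i = t")
    case True
    then show ?thesis using Suc
      by (simp add: vadd_addp unit_vec_def addp_return ret0 addp_0 pmf.map_ident)
  next
    case False
    then show ?thesis using Suc
      by (simp add: vadd_addp unit_vec_def ret0 addp_0 less_Suc_eq)
  qed
qed

lemma gw_step_unit: "t < r \<Longrightarrow> gw_step r m P (unit_vec t) = offspring r m P t"
  unfolding gw_step_def gw_step_aux_unit by simp

lemma gen_size_unit: "t < r \<Longrightarrow> gen_size r (unit_vec t) = 1"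
  unfolding gen_size_def unit_vec_def by simp

lemma ST_unit_Suc:
  assumes "t < r"
  shows "ST r m P (unit_vec t) (Suc T) = bind_pmf (offspring r m P t) (\<lambda>y. map_pmf Suc (ST r m P y T))"
  unfolding ST_def gw_state_markov gw_step_unit[OF assms] gen_size_unit[OF assms]
  by (simp add: map_bind_pmf pmf.map_comp o_def split_def)

lemma monoT: "tail (ST r m P x T) k \<le> tail (ST r m P x (Suc T)) k"
proof -
  have e1: "ST r m P x T = bind_pmf (gw_state r m P x T) (\<lambda>sz. return_pmf (fst sz))"
    unfolding ST_def map_pmf_def ..
  have e2: "ST r m P x (Suc T) = bind_pmf (gw_state r m P x T)
      (\<lambda>sz. map_pmf (\<lambda>z'. fst sz + gen_size r z') (gw_step r m P (snd sz)))"
    unfolding ST_def by (simp add: map_bind_pmf pmf.map_comp o_def split_def)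
  show ?thesis unfolding e1 e2
  proof (rule dom_bind)
    fix sz :: "nat \<times> (nat \<Rightarrow> nat)"
    show "tail (return_pmf (fst sz)) k \<le> tail (map_pmf (\<lambda>z'. fst sz + gen_size r z') (gw_step r m P (snd sz))) k"
    proof (cases "k \<le> fst sz")
      case True
      then have "(\<lambda>z'. fst sz + gen_size r z') -` {k..} = UNIV" by auto
      then show ?thesis using True by (simp add: tail_return tail_def)
    qed (simp add: tail_return tail_bounds)
  qed
qed

lemma monoT': "T \<le> T' \<Longrightarrow> tail (ST r m P x T) k \<le> tail (ST r m P x T') k"
  by (induction T' rule: dec_induct) (auto intro: order_trans monoT)

lemma domM:
  assumes "\<And>j. x j \<le> x' j"
  shows "tail (ST r m P x T) k \<le> tail (ST r m P x' T) k"
proof -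
  define d where "d = (\<lambda>j. x' j - x j)"
  have "x' = x + d" using assms by (auto simp: d_def fun_eq_iff)
  then have "ST r m P x' T = addp (ST r m P x T) (ST r m P d T)" by (simp add: ST_add)
  moreover have "tail (addp (ST r m P x T) (return_pmf 0)) k \<le> tail (addp (ST r m P x T) (ST r m P d T)) k"
    by (rule dom_addp_right) (auto simp: tail_return tail_bounds)
  ultimately show ?thesis by (simp add: addp_0)
qed

lemma GW_A:
  assumes "t < r"
  shows "tail (bind_pmf (offspring r m P t) (\<lambda>y. map_pmf Suc (ST r m P (x0 + y) T))) k
         \<le> tail (ST r m P (unit_vec t + x0) (Suc T)) k"
proof -
  let ?Y = "offspring r m P t"
  have "bind_pmf ?Y (\<lambda>y. map_pmf Suc (ST r m P (x0 + y) T))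
      = addp (ST r m P (unit_vec t) (Suc T)) (ST r m P x0 T)"
    unfolding ST_unit_Suc[OF assms] addp_bind_left addp_map_Suc ST_add[symmetric]
    by (simp add: add.commute)
  also have "tail \<dots> k \<le> tail (addp (ST r m P (unit_vec t) (Suc T)) (ST r m P x0 (Suc T))) k"
    by (rule dom_addp_right) (rule monoT)
  finally show ?thesis by (simp add: ST_add)
qed

lemma GW_B:
  assumes "t < r"
  shows "tail (ST r m P (unit_vec t + x0) T) k
       \<le> tail (bind_pmf (offspring r m P t) (\<lambda>y. map_pmf Suc (ST r m P (x0 + y) T))) k"
proof -
  let ?Y = "offspring r m P t"
  have key: "tail (ST r m P (unit_vec t) T) k' \<le> tail (bind_pmf ?Y (\<lambda>y. map_pmf Suc (ST r m P y T))) k'" for k'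
  proof (cases T)
    case 0
    show ?thesis
    proof (cases "k' \<le> 1")
      case True
      then show ?thesis unfolding 0 ST_0 gen_size_unit[OF assms] tail_bind tail_map_Suc_le1[OF True]
        by (simp add: tail_return)
    qed (simp add: 0 ST_0 gen_size_unit[OF assms] tail_return tail_bounds)
  next
    case (Suc T')
    show ?thesis unfolding Suc ST_unit_Suc[OF assms]
    proof (rule dom_bind)
      fix y
      show "tail (map_pmf Suc (ST r m P y T')) k' \<le> tail (map_pmf Suc (ST r m P y (Suc T'))) k'"
        by (cases k') (simp_all add: tail_map_Suc monoT)
    qed
  qed
  have "tail (ST r m P (unit_vec t + x0) T) k = tail (addp (ST r m P (unit_vec t) T) (ST r m P x0 T)) k"
    by (simp add: ST_add)
  also have "\<dots> \<le> tail (addp (bind_pmf ?Y (\<lambda>y. map_pmf Suc (ST r m P y T))) (ST r m P x0 T)) k"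
    by (rule dom_addp_left) (rule key)
  also have "addp (bind_pmf ?Y (\<lambda>y. map_pmf Suc (ST r m P y T))) (ST r m P x0 T)
     = bind_pmf ?Y (\<lambda>y. map_pmf Suc (ST r m P (x0 + y) T))"
    unfolding addp_bind_left addp_map_Suc ST_add[symmetric]
    by (simp add: add.commute)
  finally show ?thesis .
qed

lemma tail_ST_eq: "measure_pmf.prob (gw_state r m P x T) {sz. k \<le> fst sz} = tail (ST r m P x T) k"
  unfolding tail_def ST_def by (simp add: vimage_def)

lemma bincount_aux:
  fixes X :: "'a set" and lab :: "'a \<Rightarrow> nat" and p :: "nat \<Rightarrow> real"
  assumes X: "finite X" and p: "\<forall>j. p j \<in> {0..1}" and J: "finite J"
  shows "map_pmf (\<lambda>g j. if j \<in> J then card {x\<in>X. lab x = j \<and> g x} else 0)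
           (Pi_pmf {x\<in>X. lab x \<in> J} False (\<lambda>x. bernoulli_pmf (p (lab x))))
         = Pi_pmf J 0 (\<lambda>j. binomial_pmf (card {x\<in>X. lab x = j}) (p j))"
  using J
proof (induction J rule: finite_induct)
  case empty
  then show ?case by simp
next
  case (insert j J)
  define Xj where "Xj = {x\<in>X. lab x = j}"
  define XJ where "XJ = {x\<in>X. lab x \<in> J}"
  let ?q = "\<lambda>x. bernoulli_pmf (p (lab x))"
  let ?B = "\<lambda>j. binomial_pmf (card {x\<in>X. lab x = j}) (p j)"
  let ?c1 = "\<lambda>f. card {x\<in>Xj. f x}"
  let ?cJ = "\<lambda>g i. if i \<in> J then card {x\<in>X. lab x = i \<and> g x} else 0"
  have fin: "finite Xj" "finite XJ" using X by (auto simp: Xj_def XJ_def)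
  have un: "{x\<in>X. lab x \<in> insert j J} = Xj \<union> XJ" by (auto simp: Xj_def XJ_def)
  have dis: "Xj \<inter> XJ = {}" using insert.hyps by (auto simp: Xj_def XJ_def)
  have bj: "?B j = map_pmf ?c1 (Pi_pmf Xj False ?q)"
  proof -
    have "?B j = map_pmf ?c1 (Pi_pmf Xj False (\<lambda>_. bernoulli_pmf (p j)))"
      by (rule binomial_pmf_altdef') (use fin p in \<open>auto simp: Xj_def\<close>)
    also have "Pi_pmf Xj False (\<lambda>_. bernoulli_pmf (p j)) = Pi_pmf Xj False ?q"
      by (rule Pi_pmf_cong) (auto simp: Xj_def)
    finally show ?thesis .
  qed
  have ih: "Pi_pmf J 0 ?B = map_pmf ?cJ (Pi_pmf XJ False ?q)"
    using insert.IH by (simp add: XJ_def)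
  have "Pi_pmf (insert j J) 0 ?B = map_pmf (\<lambda>(y, f). f(j := y)) (pair_pmf (?B j) (Pi_pmf J 0 ?B))"
    by (rule Pi_pmf_insert) (use insert.hyps in auto)
  also have "\<dots> = map_pmf (\<lambda>(y, f). f(j := y))
       (map_pmf (\<lambda>(a, b). (?c1 a, ?cJ b)) (pair_pmf (Pi_pmf Xj False ?q) (Pi_pmf XJ False ?q)))"
    unfolding bj ih map_pair ..
  also have "\<dots> = map_pmf (\<lambda>(f, g). (?cJ g)(j := ?c1 f)) (pair_pmf (Pi_pmf Xj False ?q) (Pi_pmf XJ False ?q))"
    by (simp add: pmf.map_comp o_def split_def)
  also have "(\<lambda>(f, g). (?cJ g)(j := ?c1 f)) =
     (\<lambda>h i. if i \<in> insert j J then card {x\<in>X. lab x = i \<and> h x} else 0) \<circ> (\<lambda>(f, g) x. if x \<in> Xj then f x else g x)"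
  proof (intro ext, clarsimp, goal_cases)
    case (1 f g i)
    show ?case
    proof (cases "i = j")
      case True
      then show ?thesis by (auto simp: Xj_def intro!: arg_cong[where f=card])
    next
      case False
      then show ?thesis by (auto simp: Xj_def intro!: arg_cong[where f=card])
    qed
  qed
  also have "map_pmf (\<dots>) (pair_pmf (Pi_pmf Xj False ?q) (Pi_pmf XJ False ?q)) =
     map_pmf (\<lambda>h i. if i \<in> insert j J then card {x\<in>X. lab x = i \<and> h x} else 0)
       (Pi_pmf (Xj \<union> XJ) False ?q)"
    by (subst Pi_pmf_union[OF fin dis]) (simp add: pmf.map_comp)
  finally show ?case unfolding un by simp
qed

lemma bincount:
  fixes X :: "'a set" and lab :: "'a \<Rightarrow> nat" and p :: "nat \<Rightarrow> real"
  assumes X: "finite X" and lab: "\<forall>x\<in>X. lab x < r" and p: "\<forall>j. p j \<in> {0..1}"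
  shows "map_pmf (\<lambda>g j. card {x\<in>X. lab x = j \<and> g x})
           (Pi_pmf X False (\<lambda>x. bernoulli_pmf (p (lab x))))
         = Pi_pmf {..<r} 0 (\<lambda>j. binomial_pmf (card {x\<in>X. lab x = j}) (p j))"
proof -
  have e1: "{x\<in>X. lab x \<in> {..<r}} = X" using lab by auto
  have e2: "(\<lambda>g j. if j \<in> {..<r} then card {x\<in>X. lab x = j \<and> g x} else 0) = (\<lambda>g j. card {x\<in>X. lab x = j \<and> g x})"
  proof (intro ext)
    fix g j
    show "(if j \<in> {..<r} then card {x\<in>X. lab x = j \<and> g x} else 0) = card {x\<in>X. lab x = j \<and> g x}"
    proof (cases "j < r")
      case False
      then have "{x\<in>X. lab x = j \<and> g x} = {}" using lab by auto
      then have c: "card {x\<in>X. lab x = j \<and> g x} = 0" by (simp only: card.empty)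
      show ?thesis using False c by simp
    qed simp
  qed
  from bincount_aux[OF X p finite_lessThan[of r], where lab=lab] show ?thesis unfolding e1 e2 .
qed

lemma vertices_Sigma: "vertices r a = Sigma {..<r} (\<lambda>i. {..<a i})"
  unfolding vertices_def by auto

lemma finite_vertices: "finite (vertices r a)"
  unfolding vertices_Sigma by auto

lemma card_vertices_type: "j < r \<Longrightarrow> card {x\<in>vertices r a. fst x = j} = a j"
proof -
  assume j: "j < r"
  have "{x\<in>vertices r a. fst x = j} = {j} \<times> {..<a j}" using j by (auto simp: vertices_def)
  then show ?thesis by (simp add: card_cartesian_product)
qed

definition pcl :: "(nat \<Rightarrow> nat \<Rightarrow> real) \<Rightarrow> nat \<Rightarrow> nat \<Rightarrow> nat \<Rightarrow> real" where
  "pcl P r t j = (if j < r then P t j else 0)"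

lemma pcl_range:
  assumes "\<And>j. j < r \<Longrightarrow> 0 \<le> P t j" "\<And>j. j < r \<Longrightarrow> P t j \<le> 1"
  shows "\<forall>j. pcl P r t j \<in> {0..1}"
  using assms by (auto simp: pcl_def)

lemma offspring_cong:
  assumes "\<And>j. j < r \<Longrightarrow> a j = b j"
  shows "offspring r a P t = offspring r b P t"
  unfolding offspring_def by (rule Pi_pmf_cong) (auto simp: assms)

lemma offspring_count:
  fixes X :: "'a set" and lab :: "'a \<Rightarrow> nat"
  assumes X: "finite X" and lab: "\<forall>x\<in>X. lab x < r"
    and P0: "\<And>j. j < r \<Longrightarrow> 0 \<le> P t j" and P1: "\<And>j. j < r \<Longrightarrow> P t j \<le> 1"
  shows "map_pmf (\<lambda>g j. card {x\<in>X. lab x = j \<and> g x})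
           (Pi_pmf X False (\<lambda>x. bernoulli_pmf (pcl P r t (lab x))))
         = offspring r (\<lambda>j. card {x\<in>X. lab x = j}) P t"
proof -
  have "map_pmf (\<lambda>g j. card {x\<in>X. lab x = j \<and> g x})
           (Pi_pmf X False (\<lambda>x. bernoulli_pmf (pcl P r t (lab x))))
       = Pi_pmf {..<r} 0 (\<lambda>j. binomial_pmf (card {x\<in>X. lab x = j}) (pcl P r t j))"
    by (rule bincount[OF X lab pcl_range[of r P t, OF P0 P1]])
  also have "\<dots> = offspring r (\<lambda>j. card {x\<in>X. lab x = j}) P t"
    unfolding offspring_def by (rule Pi_pmf_cong) (auto simp: pcl_def)
  finally show ?thesis .
qed

lemma offspring_vert:
  assumes P0: "\<And>j. j < r \<Longrightarrow> 0 \<le> P t j" and P1: "\<And>j. j < r \<Longrightarrow> P t j \<le> 1"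
  shows "offspring r a P t = map_pmf (\<lambda>g j. card {x\<in>vertices r a. fst x = j \<and> g x})
           (Pi_pmf (vertices r a) False (\<lambda>x. bernoulli_pmf (pcl P r t (fst x))))"
proof -
  have l: "\<forall>x\<in>vertices r a. fst x < r" by (auto simp: vertices_def)
  note oc = offspring_count[where X="vertices r a" and lab=fst and r=r and P=P and t=t, OF finite_vertices l P0 P1]
  show ?thesis
    apply (subst oc, simp)
    apply (rule offspring_cong) apply (auto simp: card_vertices_type)
    done
qed

lemma off_mono:
  fixes \<phi> :: "(nat \<Rightarrow> nat) \<Rightarrow> real"
  assumes am: "\<And>j. j < r \<Longrightarrow> a j \<le> m j"
    and P0: "\<And>j. j < r \<Longrightarrow> 0 \<le> P t j" and P1: "\<And>j. j < r \<Longrightarrow> P t j \<le> 1"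
    and mono: "\<And>y y'. (\<And>j. y j \<le> y' j) \<Longrightarrow> \<phi> y \<le> \<phi> y'"
    and bnd: "\<And>y. \<bar>\<phi> y\<bar> \<le> 1"
  shows "(\<integral>y. \<phi> y \<partial>offspring r a P t) \<le> (\<integral>y. \<phi> y \<partial>offspring r m P t)"
proof -
  let ?q = "\<lambda>x. bernoulli_pmf (pcl P r t (fst x))"
  let ?Va = "vertices r a" and ?Vm = "vertices r m"
  have sub: "?Va \<subseteq> ?Vm" using am by (auto simp: vertices_def intro: less_le_trans)
  have "(\<integral>y. \<phi> y \<partial>offspring r a P t) =
     (\<integral>g. \<phi> (\<lambda>j. card {x\<in>?Va. fst x = j \<and> g x}) \<partial>Pi_pmf ?Va False ?q)"
    by (subst offspring_vert[of r P t a, OF P0 P1], simp) (rule integral_map_pmf)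
  also have "\<dots> = (\<integral>g. \<phi> (\<lambda>j. card {x\<in>?Va. fst x = j \<and> (if x \<in> ?Va then g x else False)}) \<partial>Pi_pmf ?Vm False ?q)"
    by (subst Pi_pmf_subset[OF finite_vertices sub]) simp
  also have "\<dots> \<le> (\<integral>g. \<phi> (\<lambda>j. card {x\<in>?Vm. fst x = j \<and> g x}) \<partial>Pi_pmf ?Vm False ?q)"
  proof (rule int_mono_pmf)
    fix g :: "nat \<times> nat \<Rightarrow> bool"
    show "\<phi> (\<lambda>j. card {x\<in>?Va. fst x = j \<and> (if x \<in> ?Va then g x else False)}) \<le> \<phi> (\<lambda>j. card {x\<in>?Vm. fst x = j \<and> g x})"
    proof (rule mono)
      fix j
      show "card {x\<in>?Va. fst x = j \<and> (if x \<in> ?Va then g x else False)} \<le> card {x\<in>?Vm. fst x = j \<and> g x}"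
        by (rule card_mono) (use sub finite_vertices in auto)
    qed
  qed (auto simp: bnd)
  also have "\<dots> = (\<integral>y. \<phi> y \<partial>offspring r m P t)"
    by (subst offspring_vert[of r P t m, OF P0 P1], simp) (rule integral_map_pmf[symmetric])
  finally show ?thesis .
qed

definition Eset :: "(nat \<times> nat) set \<Rightarrow> (nat \<times> nat) set set" where
  "Eset V = {{u,w} | u w. u \<in> V \<and> w \<in> V \<and> u \<noteq> w}"

definition star :: "nat \<times> nat \<Rightarrow> (nat \<times> nat) set \<Rightarrow> (nat \<times> nat) set set" where
  "star v V = {{v,u} | u. u \<in> V \<and> u \<noteq> v}"

definition qe :: "(nat \<Rightarrow> nat \<Rightarrow> real) \<Rightarrow> (nat \<times> nat) set \<Rightarrow> bool pmf" where
  "qe P e = bernoulli_pmf (edge_prob P e)"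

definition mu :: "(nat \<Rightarrow> nat \<Rightarrow> real) \<Rightarrow> (nat \<times> nat) set \<Rightarrow> ((nat \<times> nat) set \<Rightarrow> bool) pmf" where
  "mu P V = Pi_pmf (Eset V) False (qe P)"

definition R :: "((nat \<times> nat) set \<Rightarrow> bool) \<Rightarrow> (nat \<times> nat) set \<Rightarrow> (nat \<times> nat) set" where
  "R G S = (adj_rel G)\<^sup>* `` S"

definition Cd :: "(nat \<Rightarrow> nat \<Rightarrow> real) \<Rightarrow> (nat \<times> nat) set \<Rightarrow> (nat \<times> nat) set \<Rightarrow> nat pmf" where
  "Cd P V S = map_pmf (\<lambda>G. card (R G S)) (mu P V)"

definition cntS :: "(nat \<times> nat) set \<Rightarrow> nat \<Rightarrow> nat" where
  "cntS S = (\<lambda>j. card {u\<in>S. fst u = j})"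

lemma Eset_iff: "{a,b} \<in> Eset V \<longleftrightarrow> a \<in> V \<and> b \<in> V \<and> a \<noteq> b"
  unfolding Eset_def by (auto simp: doubleton_eq_iff simp del: split_paired_Ex split_paired_All)

lemma star_iff: "{a,b} \<in> star v V \<longleftrightarrow> (a = v \<and> b \<in> V \<and> b \<noteq> v) \<or> (b = v \<and> a \<in> V \<and> a \<noteq> v)"
  unfolding star_def by (auto simp: doubleton_eq_iff simp del: split_paired_Ex split_paired_All)

lemma finite_Eset: "finite V \<Longrightarrow> finite (Eset V)"
proof -
  assume "finite V"
  moreover have "Eset V \<subseteq> (\<lambda>(u,w). {u,w}) ` (V \<times> V)" unfolding Eset_def by auto
  ultimately show ?thesis by (meson finite_SigmaI finite_imageI finite_subset)
qed

lemma finite_star: "finite V \<Longrightarrow> finite (star v V)"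
proof -
  assume "finite V"
  moreover have "star v V = (\<lambda>u. {v,u}) ` (V - {v})" unfolding star_def by auto
  ultimately show ?thesis by simp
qed

lemma Eset_split: "v \<in> V \<Longrightarrow> Eset V = star v V \<union> Eset (V - {v})"
  unfolding Eset_def star_def by (auto simp: doubleton_eq_iff simp del: split_paired_Ex split_paired_All)

lemma Eset_star_disj: "star v V \<inter> Eset (V - {v}) = {}"
  unfolding Eset_def star_def by (auto simp: doubleton_eq_iff simp del: split_paired_Ex split_paired_All)

lemma adj_rel_iff: "(a, b) \<in> adj_rel G \<longleftrightarrow> G {a,b}"
  unfolding adj_rel_def by simp

lemma reach_split:
  assumes V: "finite V" and vS: "v \<in> S" and SV: "S \<subseteq> V"
    and G2: "\<And>e. e \<notin> Eset (V - {v}) \<Longrightarrow> \<not> G2 e"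
  shows "card (R (\<lambda>e. if e \<in> star v V then G1 e else G2 e) S)
         = Suc (card (R G2 ((S - {v}) \<union> {u\<in>V-S. G1 {v,u}})))"
proof -
  define G where "G = (\<lambda>e. if e \<in> star v V then G1 e else G2 e)"
  define S' where "S' = (S - {v}) \<union> {u\<in>V-S. G1 {v,u}}"
  have S'sub: "S' \<subseteq> V - {v}" using SV vS by (auto simp: S'_def)
  have G2e: "G2 {a,b} \<Longrightarrow> a \<in> V - {v} \<and> b \<in> V - {v} \<and> a \<noteq> b" for a b
    using G2[of "{a,b}"] by (auto simp: Eset_iff)
  have R2sub: "R G2 S' \<subseteq> V - {v}"
  proof
    fix x assume "x \<in> R G2 S'"
    then obtain s where s: "s \<in> S'" "(s, x) \<in> (adj_rel G2)\<^sup>*" unfolding R_def by auto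
    from s(2) show "x \<in> V - {v}"
    proof (induction rule: rtrancl_induct)
      case base then show ?case using s(1) S'sub by auto
    next
      case (step y z) then show ?case using G2e by (auto simp: adj_rel_iff)
    qed
  qed
  have sub2: "adj_rel G2 \<subseteq> adj_rel G"
  proof
    fix p assume "p \<in> adj_rel G2"
    then obtain a b where p: "p = (a,b)" "G2 {a,b}" by (cases p) (auto simp: adj_rel_iff)
    then have "{a,b} \<notin> star v V" using G2e[of a b] by (auto simp: star_iff)
    then show "p \<in> adj_rel G" using p by (auto simp: adj_rel_iff G_def)
  qed
  have S'R2: "S' \<subseteq> R G2 S'" unfolding R_def by auto
  have eq: "R G S = insert v (R G2 S')"
  proof
    show "R G S \<subseteq> insert v (R G2 S')"
    proof
      fix x assume "x \<in> R G S"
      then obtain s where s: "s \<in> S" "(s, x) \<in> (adj_rel G)\<^sup>*" unfolding R_def by auto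
      from s(2) show "x \<in> insert v (R G2 S')"
      proof (induction rule: rtrancl_induct)
        case base
        then show ?case using s(1) S'R2 by (cases "s = v") (auto simp: S'_def)
      next
        case (step y z)
        then have Gyz: "G {y,z}" by (simp add: adj_rel_iff)
        show ?case
        proof (cases "{y,z} \<in> star v V")
          case True
          then have G1yz: "G1 {y,z}" using Gyz by (simp add: G_def)
          from True consider "y = v \<and> z \<in> V \<and> z \<noteq> v" | "z = v" by (auto simp: star_iff)
          then show ?thesis
          proof cases
            case 1
            then have "z \<in> S'" using G1yz by (auto simp: S'_def)
            then show ?thesis using S'R2 by auto
          qed simp
        next
          case False
          then have G2yz: "G2 {y,z}" using Gyz by (simp add: G_def)
          then have "y \<noteq> v" using G2e by auto
          then have yR: "y \<in> R G2 S'" using step.IH by auto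
          have "(y,z) \<in> adj_rel G2" using G2yz by (simp add: adj_rel_iff)
          then have "z \<in> R G2 S'" using yR unfolding R_def
            by (meson Image_iff rtrancl.rtrancl_into_rtrancl)
          then show ?thesis by simp
        qed
      qed
    qed
  next
    show "insert v (R G2 S') \<subseteq> R G S"
    proof
      fix x assume x: "x \<in> insert v (R G2 S')"
      show "x \<in> R G S"
      proof (cases "x = v")
        case True then show ?thesis using vS unfolding R_def by auto
      next
        case False
        then have "x \<in> R G2 S'" using x by auto
        then obtain s where s: "s \<in> S'" "(s, x) \<in> (adj_rel G2)\<^sup>*" unfolding R_def by auto
        have sx: "(s, x) \<in> (adj_rel G)\<^sup>*" using rtrancl_mono[OF sub2] s(2) by auto
        show ?thesis
        proof (cases "s \<in> S")
          case True then show ?thesis using sx unfolding R_def by auto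
        next
          case False
          then have sN: "s \<in> V" "G1 {v,s}" "s \<noteq> v" using s(1) vS by (auto simp: S'_def)
          then have "{v,s} \<in> star v V" by (auto simp: star_iff)
          then have "(v, s) \<in> adj_rel G" using sN by (auto simp: adj_rel_iff G_def)
          then have "(v, x) \<in> (adj_rel G)\<^sup>*" using sx by (rule converse_rtrancl_into_rtrancl)
          then show ?thesis using vS unfolding R_def by auto
        qed
      qed
    qed
  qed
  have fin: "finite (R G2 S')" using R2sub V by (meson finite_Diff finite_subset)
  have "v \<notin> R G2 S'" using R2sub by auto
  then have "card (R G S) = Suc (card (R G2 S'))" using eq fin by simp
  then show ?thesis by (simp only: G_def S'_def)
qed

lemma graph_rec:
  assumes V: "finite V" and vS: "v \<in> S" and SV: "S \<subseteq> V"
  shows "Cd P V S = bind_pmf (Pi_pmf (star v V) False (qe P))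
           (\<lambda>G1. map_pmf Suc (Cd P (V - {v}) ((S - {v}) \<union> {u\<in>V-S. G1 {v,u}})))"
proof -
  have vV: "v \<in> V" using vS SV by auto
  let ?A = "Pi_pmf (star v V) False (qe P)"
  let ?B = "mu P (V - {v})"
  have "mu P V = map_pmf (\<lambda>(f,g) x. if x \<in> star v V then f x else g x) (pair_pmf ?A ?B)"
    unfolding mu_def Eset_split[OF vV]
    by (rule Pi_pmf_union) (auto simp: finite_star finite_Eset V Eset_star_disj)
  then have "Cd P V S = map_pmf (\<lambda>(f,g). card (R (\<lambda>x. if x \<in> star v V then f x else g x) S)) (pair_pmf ?A ?B)"
    unfolding Cd_def by (simp add: pmf.map_comp o_def case_prod_unfold)
  also have "\<dots> = bind_pmf ?A (\<lambda>f. map_pmf (\<lambda>g. card (R (\<lambda>x. if x \<in> star v V then f x else g x) S)) ?B)"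
    by (simp add: pair_pmf_def map_bind_pmf map_pmf_def bind_assoc_pmf bind_return_pmf)
  also have "\<dots> = bind_pmf ?A (\<lambda>G1. map_pmf Suc (Cd P (V - {v}) ((S - {v}) \<union> {u\<in>V-S. G1 {v,u}})))"
  proof (intro bind_pmf_cong refl)
    fix f
    have "map_pmf (\<lambda>g. card (R (\<lambda>x. if x \<in> star v V then f x else g x) S)) ?B
        = map_pmf (\<lambda>g. Suc (card (R g ((S - {v}) \<union> {u\<in>V-S. f {v,u}})))) ?B"
    proof (rule map_pmf_cong[OF refl])
      fix g assume "g \<in> set_pmf ?B"
      then have "\<And>e. e \<notin> Eset (V - {v}) \<Longrightarrow> \<not> g e"
        using set_Pi_pmf_subset[of "Eset (V - {v})" False "qe P"] V
        unfolding mu_def by (auto simp: finite_Eset)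
      then show "card (R (\<lambda>x. if x \<in> star v V then f x else g x) S) = Suc (card (R g ((S - {v}) \<union> {u\<in>V-S. f {v,u}})))"
        by (rule reach_split[OF V vS SV])
    qed
    then show "map_pmf (\<lambda>g. card (R (\<lambda>x. if x \<in> star v V then f x else g x) S)) ?B
        = map_pmf Suc (Cd P (V - {v}) ((S - {v}) \<union> {u\<in>V-S. f {v,u}}))"
      by (simp add: Cd_def pmf.map_comp o_def)
  qed
  finally show ?thesis .
qed

lemma edge_prob_eq:
  assumes symP: "\<And>i j. i < r \<Longrightarrow> j < r \<Longrightarrow> P i j = P j i"
    and u: "fst u < r" and w: "fst w < r"
  shows "edge_prob P {u,w} = P (fst u) (fst w)"
  unfolding edge_prob_def
proof (rule someI2[where a = "P (fst u) (fst w)"])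
  show "\<exists>a b. {u, w} = {a, b} \<and> P (fst u) (fst w) = P (fst a) (fst b)" by blast
next
  fix q assume "\<exists>a b. {u, w} = {a, b} \<and> q = P (fst a) (fst b)"
  then obtain a b where ab: "{u, w} = {a, b}" "q = P (fst a) (fst b)" by blast
  from ab(1) have "(u = a \<and> w = b) \<or> (u = b \<and> w = a)" by (simp add: doubleton_eq_iff)
  then show "q = P (fst u) (fst w)" using ab(2) symP u w by auto
qed

lemma N_dist:
  assumes V: "finite V" and vS: "v \<in> S" and SV: "S \<subseteq> V" and Vr: "\<forall>u\<in>V. fst u < r"
    and symP: "\<And>i j. i < r \<Longrightarrow> j < r \<Longrightarrow> P i j = P j i"
    and P0: "\<And>j. j < r \<Longrightarrow> 0 \<le> P (fst v) j" and P1: "\<And>j. j < r \<Longrightarrow> P (fst v) j \<le> 1"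
  shows "map_pmf (\<lambda>G1. cntS {u\<in>V-S. G1 {v,u}}) (Pi_pmf (star v V) False (qe P))
         = offspring r (cntS (V - S)) P (fst v)"
proof -
  define X where "X = (\<lambda>u. {v,u}) ` (V - S)"
  define lab where "lab = (\<lambda>e. fst (SOME u. u \<in> e \<and> u \<noteq> v))"
  have lab_eq: "lab {v,u} = fst u" if "u \<noteq> v" for u
  proof -
    have "(SOME x. x \<in> {v,u} \<and> x \<noteq> v) = u" using that by (intro some_equality) auto
    then show ?thesis by (simp add: lab_def)
  qed
  have inj: "inj_on (\<lambda>u. {v,u}) (V - S)"
    using vS by (auto simp: inj_on_def doubleton_eq_iff)
  have cardX: "card {e\<in>X. lab e = j \<and> Q e} = card {u\<in>V-S. fst u = j \<and> Q {v,u}}" for Q j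
  proof -
    have "{e\<in>X. lab e = j \<and> Q e} = (\<lambda>u. {v,u}) ` {u\<in>V-S. fst u = j \<and> Q {v,u}}"
    proof (intro equalityI subsetI)
      fix e assume "e \<in> {e\<in>X. lab e = j \<and> Q e}"
      then obtain u where u: "u \<in> V - S" "e = {v,u}" "lab e = j" "Q e" by (auto simp: X_def)
      then have "u \<noteq> v" using vS by auto
      then have "fst u = j" using u lab_eq by simp
      then show "e \<in> (\<lambda>u. {v,u}) ` {u\<in>V-S. fst u = j \<and> Q {v,u}}" using u by blast
    next
      fix e assume "e \<in> (\<lambda>u. {v,u}) ` {u\<in>V-S. fst u = j \<and> Q {v,u}}"
      then obtain u where u: "u \<in> V - S" "e = {v,u}" "fst u = j" "Q e" by blast
      then have "u \<noteq> v" using vS by auto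
      then have "lab e = j" using u lab_eq by simp
      then show "e \<in> {e\<in>X. lab e = j \<and> Q e}" using u by (auto simp: X_def)
    qed
    moreover have "inj_on (\<lambda>u. {v,u}) {u\<in>V-S. fst u = j \<and> Q {v,u}}"
      by (rule inj_on_subset[OF inj]) auto
    ultimately show ?thesis by (simp add: card_image)
  qed
  have XS: "X \<subseteq> star v V" using vS by (auto simp: X_def star_def)
  have finX: "finite X" using V by (simp add: X_def)
  have vr: "fst v < r" using Vr vS SV by auto
  have labr: "\<forall>x\<in>X. lab x < r"
  proof
    fix e assume "e \<in> X"
    then obtain u where u: "u \<in> V - S" "e = {v,u}" by (auto simp: X_def)
    then have "u \<noteq> v" using vS by auto
    then show "lab e < r" using u lab_eq Vr by auto
  qed
  have Pcong: "Pi_pmf X False (qe P) = Pi_pmf X False (\<lambda>x. bernoulli_pmf (pcl P r (fst v) (lab x)))"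
  proof (rule Pi_pmf_cong[OF refl refl])
    fix e assume "e \<in> X"
    then obtain u where u: "e = {v,u}" "u \<in> V" "u \<notin> S" by (auto simp: X_def)
    then have uv: "u \<noteq> v" and ur: "fst u < r" using vS Vr by auto
    have "edge_prob P {v,u} = P (fst v) (fst u)"
      by (rule edge_prob_eq[where u=v and w=u, OF symP vr ur])
    then show "qe P e = bernoulli_pmf (pcl P r (fst v) (lab e))"
      using u uv ur by (simp add: qe_def pcl_def lab_eq)
  qed
  have "map_pmf (\<lambda>G1. cntS {u\<in>V-S. G1 {v,u}}) (Pi_pmf (star v V) False (qe P))
      = map_pmf (\<lambda>G1 j. card {e\<in>X. lab e = j \<and> (if e \<in> X then G1 e else False)}) (Pi_pmf (star v V) False (qe P))"
  proof (rule map_pmf_cong[OF refl])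
    fix G1
    show "cntS {u\<in>V-S. G1 {v,u}} = (\<lambda>j. card {e\<in>X. lab e = j \<and> (if e \<in> X then G1 e else False)})"
      unfolding cardX cntS_def
      by (intro ext arg_cong[where f=card]) (auto simp: X_def)
  qed
  also have "\<dots> = map_pmf (\<lambda>g j. card {e\<in>X. lab e = j \<and> g e}) (Pi_pmf X False (qe P))"
    by (subst Pi_pmf_subset[OF finite_star[OF V] XS]) (simp add: pmf.map_comp o_def)
  also have "\<dots> = offspring r (\<lambda>j. card {e\<in>X. lab e = j}) P (fst v)"
    unfolding Pcong by (rule offspring_count[where P=P and t="fst v", OF finX labr P0 P1])
  also have "(\<lambda>j. card {e\<in>X. lab e = j}) = cntS (V - S)"
    using cardX[of _ "\<lambda>_. True"] by (auto simp: cntS_def)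
  finally show ?thesis .
qed

lemma cntS_union: "finite A \<Longrightarrow> finite B \<Longrightarrow> A \<inter> B = {} \<Longrightarrow> cntS (A \<union> B) = cntS A + cntS B"
proof -
  assume f: "finite A" "finite B" and d: "A \<inter> B = {}"
  show ?thesis
  proof (rule ext)
    fix j
    have "{u\<in>A \<union> B. fst u = j} = {u\<in>A. fst u = j} \<union> {u\<in>B. fst u = j}" by auto
    then show "cntS (A \<union> B) j = (cntS A + cntS B) j"
      using f d by (simp add: cntS_def card_Un_disjoint disjoint_iff)
  qed
qed

lemma cntS_single: "cntS {v} = unit_vec (fst v)"
proof (rule ext)
  fix j
  have "{u\<in>{v}. fst u = j} = (if j = fst v then {v} else {})" by auto
  then show "cntS {v} j = unit_vec (fst v) j" by (simp add: cntS_def unit_vec_def)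
qed

lemma cntS_empty: "cntS {} = (\<lambda>_. 0)"
  by (auto simp: cntS_def fun_eq_iff)

lemma cntS_le_card: "finite A \<Longrightarrow> cntS A j \<le> card A"
  unfolding cntS_def by (rule card_mono) auto

lemma cntS_vertices: "V \<subseteq> vertices r n \<Longrightarrow> j < r \<Longrightarrow> cntS V j \<le> n j"
proof -
  assume V: "V \<subseteq> vertices r n" and j: "j < r"
  have "{u\<in>V. fst u = j} \<subseteq> {x\<in>vertices r n. fst x = j}" using V by auto
  then have "card {u\<in>V. fst u = j} \<le> card {x\<in>vertices r n. fst x = j}"
    by (intro card_mono) (simp_all add: finite_vertices)
  then show ?thesis by (simp add: cntS_def card_vertices_type[OF j])
qed

lemma gw_step_aux_zero: "gw_step_aux r m P (\<lambda>_. 0) i = return_pmf (\<lambda>_. 0)"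
  by (induction i) (simp_all add: vadd_pmf_def bind_return_pmf bind_return_pmf')

lemma ST_zero: "ST r m P (\<lambda>_. 0) T = return_pmf 0"
proof -
  have "gw_state r m P (\<lambda>_. 0) T = return_pmf (0, (\<lambda>_. 0))"
  proof (induction T)
    case 0 then show ?case by (simp add: gen_size_def)
  next
    case (Suc T) then show ?case
      by (simp add: gw_step_def gw_step_aux_zero gen_size_def bind_return_pmf)
  qed
  then show ?thesis by (simp add: ST_def)
qed

lemma Cd_empty: "Cd P V {} = return_pmf 0"
  unfolding Cd_def R_def by simp

lemma R_support:
  assumes "G \<in> set_pmf (mu P V)" "finite V" "S \<subseteq> V"
  shows "R G S \<subseteq> V"
proof
  have G: "\<And>e. e \<notin> Eset V \<Longrightarrow> \<not> G e"
    using set_Pi_pmf_subset[of "Eset V" False "qe P"] assms unfolding mu_def by (auto simp: finite_Eset)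
  fix x assume "x \<in> R G S"
  then obtain s where s: "s \<in> S" "(s, x) \<in> (adj_rel G)\<^sup>*" unfolding R_def by auto
  from s(2) show "x \<in> V"
  proof (induction rule: rtrancl_induct)
    case base then show ?case using s(1) assms by auto
  next
    case (step y z) then show ?case using G[of "{y,z}"] by (auto simp: adj_rel_iff Eset_iff)
  qed
qed

lemma tail_Cd_big:
  assumes "finite V" "S \<subseteq> V" "k \<le> card S"
  shows "tail (Cd P V S) k = 1"
proof -
  have "measure_pmf.prob (mu P V) {G. k \<le> card (R G S)} = 1"
  proof (subst measure_pmf.prob_eq_1)
    show "AE x in measure_pmf (mu P V). x \<in> {G. k \<le> card (R G S)}"
    proof (rule AE_pmfI)
      fix G assume G: "G \<in> set_pmf (mu P V)"
      have "R G S \<subseteq> V" by (rule R_support[OF G assms(1,2)])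
      then have "finite (R G S)" using assms(1) by (rule finite_subset)
      moreover have "S \<subseteq> R G S" unfolding R_def by auto
      ultimately have "card S \<le> card (R G S)" by (rule card_mono)
      then show "G \<in> {G. k \<le> card (R G S)}" using assms(3) by simp
    qed
  qed simp
  then show ?thesis unfolding tail_def Cd_def by (simp add: vimage_def)
qed

lemma upper_ind:
  assumes symP: "\<And>i j. i < r \<Longrightarrow> j < r \<Longrightarrow> P i j = P j i"
    and P0: "\<And>i j. i < r \<Longrightarrow> j < r \<Longrightarrow> 0 \<le> P i j"
    and P1: "\<And>i j. i < r \<Longrightarrow> j < r \<Longrightarrow> P i j \<le> 1"
  shows "V \<subseteq> vertices r n \<Longrightarrow> S \<subseteq> V \<Longrightarrow> tail (Cd P V S) k \<le> tail (ST r n P (cntS S) k) k"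
proof (induction k arbitrary: V S)
  case 0
  then show ?case by simp
next
  case (Suc k)
  have finV: "finite V" using Suc.prems(1) finite_vertices by (rule finite_subset)
  have Vr: "\<forall>u\<in>V. fst u < r" using Suc.prems(1) by (auto simp: vertices_def)
  show ?case
  proof (cases "S = {}")
    case True
    then show ?thesis by (simp add: Cd_empty tail_return tail_bounds)
  next
    case False
    then obtain v where vS: "v \<in> S" by auto
    define t where "t = fst v"
    have tr: "t < r" using Vr vS Suc.prems(2) by (auto simp: t_def)
    define x0 where "x0 = cntS (S - {v})"
    define N where "N = (\<lambda>G1. {u\<in>V-S. G1 {v,u}})"
    define \<phi> where "\<phi> = (\<lambda>y. tail (ST r n P (x0 + y) k) k)"
    let ?A = "Pi_pmf (star v V) False (qe P)"
    have finS: "finite S" by (rule finite_subset[OF Suc.prems(2) finV])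
    have cS: "cntS S = unit_vec t + x0"
    proof -
      have "S = {v} \<union> (S - {v})" using vS by auto
      then have "cntS S = cntS {v} + cntS (S - {v})"
        using finS by (metis cntS_union Diff_disjoint finite.emptyI finite.insertI finite_Diff)
      then show ?thesis by (simp add: cntS_single t_def x0_def)
    qed
    have cS': "cntS ((S - {v}) \<union> N G1) = x0 + cntS (N G1)" for G1
      unfolding x0_def by (rule cntS_union) (use finS finV in \<open>auto simp: N_def\<close>)
    have "tail (Cd P V S) (Suc k) = (\<integral>G1. tail (Cd P (V - {v}) ((S - {v}) \<union> N G1)) k \<partial>?A)"
      unfolding graph_rec[OF finV vS Suc.prems(2)] tail_bind N_def by (simp add: tail_map_Suc)
    also have "\<dots> \<le> (\<integral>G1. \<phi> (cntS (N G1)) \<partial>?A)"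
    proof (rule int_mono_pmf)
      fix G1
      have "tail (Cd P (V - {v}) ((S - {v}) \<union> N G1)) k \<le> tail (ST r n P (cntS ((S - {v}) \<union> N G1)) k) k"
        by (rule Suc.IH) (use Suc.prems vS in \<open>auto simp: N_def\<close>)
      then show "tail (Cd P (V - {v}) ((S - {v}) \<union> N G1)) k \<le> \<phi> (cntS (N G1))"
        by (simp add: cS' \<phi>_def)
    qed (auto simp: \<phi>_def tail_bounds)
    also have "\<dots> = (\<integral>y. \<phi> y \<partial>map_pmf (\<lambda>G1. cntS (N G1)) ?A)" by simp
    also have "map_pmf (\<lambda>G1. cntS (N G1)) ?A = offspring r (cntS (V - S)) P t"
      unfolding N_def t_def
      by (rule N_dist[OF finV vS Suc.prems(2) Vr symP]) (use tr P0 P1 in \<open>auto simp: t_def\<close>)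
    also have "(\<integral>y. \<phi> y \<partial>offspring r (cntS (V - S)) P t) \<le> (\<integral>y. \<phi> y \<partial>offspring r n P t)"
    proof (rule off_mono)
      fix j assume "j < r"
      then show "cntS (V - S) j \<le> n j" using Suc.prems(1) by (intro cntS_vertices) auto
    next
      fix y y' :: "nat \<Rightarrow> nat" assume "\<And>j. y j \<le> y' j"
      then show "\<phi> y \<le> \<phi> y'" unfolding \<phi>_def by (intro domM) (simp add: add_mono)
    qed (use tr P0 P1 in \<open>auto simp: \<phi>_def tail_bounds\<close>)
    also have "(\<integral>y. \<phi> y \<partial>offspring r n P t) = tail (bind_pmf (offspring r n P t) (\<lambda>y. map_pmf Suc (ST r n P (x0 + y) k))) (Suc k)"
      by (simp add: tail_bind tail_map_Suc \<phi>_def)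
    also have "\<dots> \<le> tail (ST r n P (unit_vec t + x0) (Suc k)) (Suc k)"
      by (rule GW_A[OF tr])
    finally show ?thesis unfolding cS .
  qed
qed

lemma lower_ind:
  assumes symP: "\<And>i j. i < r \<Longrightarrow> j < r \<Longrightarrow> P i j = P j i"
    and P0: "\<And>i j. i < r \<Longrightarrow> j < r \<Longrightarrow> 0 \<le> P i j"
    and P1: "\<And>i j. i < r \<Longrightarrow> j < r \<Longrightarrow> P i j \<le> 1"
  shows "V \<subseteq> vertices r n \<Longrightarrow> S \<subseteq> V \<Longrightarrow> (\<forall>j<r. m j + k \<le> cntS (V - S) j + card S)
    \<Longrightarrow> tail (ST r m P (cntS S) T) k \<le> tail (Cd P V S) k"
proof (induction k arbitrary: V S)
  case 0
  then show ?case by simp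
next
  case (Suc k)
  have finV: "finite V" using Suc.prems(1) finite_vertices by (rule finite_subset)
  have Vr: "\<forall>u\<in>V. fst u < r" using Suc.prems(1) by (auto simp: vertices_def)
  have finS: "finite S" by (rule finite_subset[OF Suc.prems(2) finV])
  show ?case
  proof (cases "Suc k \<le> card S")
    case True
    then show ?thesis using tail_Cd_big[OF finV Suc.prems(2) True] by (simp add: tail_bounds)
  next
    case False
    then have cSk: "card S \<le> k" by simp
    show ?thesis
    proof (cases "S = {}")
      case True
      then show ?thesis by (simp add: cntS_empty ST_zero tail_return tail_bounds)
    next
      case False
      then obtain v where vS: "v \<in> S" by auto
      define t where "t = fst v"
      have tr: "t < r" using Vr vS Suc.prems(2) by (auto simp: t_def)
      define x0 where "x0 = cntS (S - {v})"
      define N where "N = (\<lambda>G1. {u\<in>V-S. G1 {v,u}})"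
      define \<phi> where "\<phi> = (\<lambda>y. tail (ST r m P (x0 + y) T) k)"
      let ?A = "Pi_pmf (star v V) False (qe P)"
      have cS: "cntS S = unit_vec t + x0"
      proof -
        have "S = {v} \<union> (S - {v})" using vS by auto
        then have "cntS S = cntS {v} + cntS (S - {v})"
          using finS by (metis cntS_union Diff_disjoint finite.emptyI finite.insertI finite_Diff)
        then show ?thesis by (simp add: cntS_single t_def x0_def)
      qed
      have cS': "cntS ((S - {v}) \<union> N G1) = x0 + cntS (N G1)" for G1
        unfolding x0_def by (rule cntS_union) (use finS finV in \<open>auto simp: N_def\<close>)
      have "tail (ST r m P (cntS S) T) (Suc k) \<le> tail (bind_pmf (offspring r m P t) (\<lambda>y. map_pmf Suc (ST r m P (x0 + y) T))) (Suc k)"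
        unfolding cS by (rule GW_B[OF tr])
      also have "\<dots> = (\<integral>y. \<phi> y \<partial>offspring r m P t)"
        by (simp add: tail_bind tail_map_Suc \<phi>_def)
      also have "\<dots> \<le> (\<integral>y. \<phi> y \<partial>offspring r (cntS (V - S)) P t)"
      proof (rule off_mono)
        fix j assume j: "j < r"
        then show "m j \<le> cntS (V - S) j" using Suc.prems(3) cSk by auto
      next
        fix y y' :: "nat \<Rightarrow> nat" assume "\<And>j. y j \<le> y' j"
        then show "\<phi> y \<le> \<phi> y'" unfolding \<phi>_def by (intro domM) (simp add: add_mono)
      qed (use tr P0 P1 in \<open>auto simp: \<phi>_def tail_bounds\<close>)
      also have "offspring r (cntS (V - S)) P t = map_pmf (\<lambda>G1. cntS (N G1)) ?A"
        unfolding N_def t_def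
        by (rule N_dist[OF finV vS Suc.prems(2) Vr symP, symmetric]) (use tr P0 P1 in \<open>auto simp: t_def\<close>)
      also have "(\<integral>y. \<phi> y \<partial>map_pmf (\<lambda>G1. cntS (N G1)) ?A) = (\<integral>G1. \<phi> (cntS (N G1)) \<partial>?A)" by simp
      also have "\<dots> \<le> (\<integral>G1. tail (Cd P (V - {v}) ((S - {v}) \<union> N G1)) k \<partial>?A)"
      proof (rule int_mono_pmf)
        fix G1
        define D where "D = V - S"
        have ND: "N G1 \<subseteq> D" by (auto simp: N_def D_def)
        have finD: "finite D" using finV by (simp add: D_def)
        have finN: "finite (N G1)" using ND finD by (rule finite_subset)
        have e1: "(V - {v}) - ((S - {v}) \<union> N G1) = D - N G1" using vS by (auto simp: D_def)
        have e2: "cntS D = cntS (D - N G1) + cntS (N G1)"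
        proof -
          have "D = (D - N G1) \<union> N G1" using ND by auto
          then show ?thesis using finD finN by (metis cntS_union Diff_disjoint finite_Diff inf_commute)
        qed
        have e3: "card ((S - {v}) \<union> N G1) = card (S - {v}) + card (N G1)"
          by (rule card_Un_disjoint) (use finS finN vS in \<open>auto simp: N_def\<close>)
        have e4: "card S = Suc (card (S - {v}))" using finS vS by (metis card_Suc_Diff1)
        have cond: "\<forall>j<r. m j + k \<le> cntS ((V - {v}) - ((S - {v}) \<union> N G1)) j + card ((S - {v}) \<union> N G1)"
        proof (intro allI impI)
          fix j assume j: "j < r"
          have h: "m j + Suc k \<le> cntS D j + card S" using Suc.prems(3) j by (simp add: D_def)
          have h2: "cntS (N G1) j \<le> card (N G1)" using finN by (rule cntS_le_card)
          have "cntS D j = cntS (D - N G1) j + cntS (N G1) j" using e2 by (simp add: fun_eq_iff)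
          then show "m j + k \<le> cntS ((V - {v}) - ((S - {v}) \<union> N G1)) j + card ((S - {v}) \<union> N G1)"
            unfolding e1 e3 using h h2 e4 by linarith
        qed
        have "tail (ST r m P (cntS ((S - {v}) \<union> N G1)) T) k \<le> tail (Cd P (V - {v}) ((S - {v}) \<union> N G1)) k"
          by (rule Suc.IH) (use Suc.prems vS cond in \<open>auto simp: N_def\<close>)
        then show "\<phi> (cntS (N G1)) \<le> tail (Cd P (V - {v}) ((S - {v}) \<union> N G1)) k"
          by (simp add: cS' \<phi>_def)
      qed (auto simp: \<phi>_def tail_bounds)
      also have "\<dots> = tail (Cd P V S) (Suc k)"
        unfolding graph_rec[OF finV vS Suc.prems(2)] tail_bind N_def by (simp add: tail_map_Suc)
      finally show ?thesis .
    qed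
  qed
qed

theorem lemma3p2:
  fixes r k :: nat and P :: "nat \<Rightarrow> nat \<Rightarrow> real" and Tv n :: "nat \<Rightarrow> nat"
    and i a :: nat
  assumes symP: "\<And>i j. i < r \<Longrightarrow> j < r \<Longrightarrow> P i j = P j i"
    and P_nonneg: "\<And>i j. i < r \<Longrightarrow> j < r \<Longrightarrow> 0 \<le> P i j"
    and P_le1: "\<And>i j. i < r \<Longrightarrow> j < r \<Longrightarrow> P i j \<le> 1"
    and kT: "\<And>j. j < r \<Longrightarrow> k \<le> Tv j"
    and Tn: "\<And>j. j < r \<Longrightarrow> Tv j \<le> n j"
    and i: "i < r"
    and a: "a < n i"
  shows "gw_pop_ge_prob r (\<lambda>j. n j - Tv j) P (unit_vec i) k
           \<le> measure_pmf.prob (Gnp r n P) {G. k \<le> card (CC G (i, a))}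
       \<and> measure_pmf.prob (Gnp r n P) {G. k \<le> card (CC G (i, a))}
           \<le> gw_pop_ge_prob r n P (unit_vec i) k"
proof -
  let ?V = "vertices r n" and ?S = "{(i, a)}"
  have SV: "?S \<subseteq> ?V" using i a by (auto simp: vertices_def)
  have Gnp_eq: "Gnp r n P = mu P ?V"
    unfolding Gnp_def mu_def qe_def pot_edges_def Eset_def ..
  have prob_eq: "measure_pmf.prob (Gnp r n P) {G. k \<le> card (CC G (i, a))} = tail (Cd P ?V ?S) k"
    unfolding Gnp_eq tail_def Cd_def by (simp add: vimage_def CC_def R_def)
  have cS: "cntS ?S = unit_vec i" using cntS_single[of "(i, a)"] by simp
  have gw: "gw_pop_ge_prob r m P (unit_vec i) k = (SUP T. tail (ST r m P (unit_vec i) T) k)" for m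
    unfolding gw_pop_ge_prob_def tail_ST_eq ..
  have bdd: "bdd_above (range (\<lambda>T. tail (ST r m P (unit_vec i) T) k))" for m
    by (rule bdd_aboveI[where M=1]) (auto simp: tail_bounds)
  have up: "tail (Cd P ?V ?S) k \<le> gw_pop_ge_prob r n P (unit_vec i) k"
  proof -
    have "tail (Cd P ?V ?S) k \<le> tail (ST r n P (unit_vec i) k) k"
      using upper_ind[where k=k, OF symP P_nonneg P_le1 order_refl SV] cS by simp
    also have "\<dots> \<le> (SUP T. tail (ST r n P (unit_vec i) T) k)"
      by (rule cSUP_upper[OF UNIV_I bdd])
    finally show ?thesis unfolding gw .
  qed
  have low: "gw_pop_ge_prob r (\<lambda>j. n j - Tv j) P (unit_vec i) k \<le> tail (Cd P ?V ?S) k"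
    unfolding gw
  proof (rule cSUP_least)
    fix T
    have cond: "\<forall>j<r. (n j - Tv j) + k \<le> cntS (?V - ?S) j + card ?S"
    proof (intro allI impI)
      fix j assume j: "j < r"
      have "{u \<in> ?V - ?S. fst u = j} = {u \<in> ?V. fst u = j} - {(i, a)}" by auto
      then have "cntS (?V - ?S) j \<ge> n j - 1"
        unfolding cntS_def using card_vertices_type[OF j, of n]
        by (simp add: card_Diff_singleton_if)
      then show "(n j - Tv j) + k \<le> cntS (?V - ?S) j + card ?S"
        using kT[OF j] Tn[OF j] by simp
    qed
    show "tail (ST r (\<lambda>j. n j - Tv j) P (unit_vec i) T) k \<le> tail (Cd P ?V ?S) k"
      using lower_ind[where T=T, OF symP P_nonneg P_le1 order_refl SV cond] cS by simp
  qed simp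
  show ?thesis using up low prob_eq by simp
qed

end
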